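(* Let $p\in\mathcal P$ and assume that both $\Gamma_{\mu(p)}(p)$ and $\Gamma_{\mu(p^r)}(p^r)$ admit an acyclic connected component. Then: (i) $\mu(p)=\mu(p^r)$; (ii) if $\Gamma_{\mu(p)}(p)$ is connected, then $D_{\mu(p)}(p)\cap D_{\mu(p^r)}(p^r)=\varnothing$; (iii) if $\Gamma_{\mu(p)}(p)$ is acyclic, then there is no $x\in N$ with $D_{\mu(p)}(p)=D_{\mu(p^r)}(p^r)=\{x\}$.
   Context: Let $n,h\ge2$, $N=\{1,\dots,n\}$, $H=\{1,\dots,h\}$, $\mathcal P$ the set of $h$-tuples of linear orders on $N$, $p^r$ the profile obtained by reversing each order; $x>_{p_i}y$ means $x\neq y$ and $p_i$ ranks $x$ above $y$; for an integer $\mu\in(h/2,h]$, $x>^p_\mu y$ means $|\{i: x>_{p_i}y\}|\ge\mu$; $D_\mu(p)=\{x\in N: \forall y,\ |\{i: y>_{p_i}x\}|<\mu\}$; $\mu(p)=\min\{\mu\in\mathbb N\cap(h/2,h]: D_\mu(p)\ne\varnothing\}$. $\Gamma_\mu(p)$ is the directed graph $(N,\{(x,y): x>^p_\mu y\})$. Connected components are those of the underlying undirected graph; a directed graph is acyclic if it contains no directed cycle (on $l\ge2$ distinct vertices) as a subgraph. *)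

theory Defs
  imports Main
begin

text \<open>A linear order on N = {1..n} is represented as a relation r with linear_order_on {1..n} r;
  (x,y) \<in> r means that x is ranked weakly above y. A profile is p :: nat \<Rightarrow> nat rel,
  with p i the order of voter i \<in> H = {1..h} (values outside H are irrelevant).\<close>

definition is_profile :: "nat \<Rightarrow> nat \<Rightarrow> (nat \<Rightarrow> nat rel) \<Rightarrow> bool" where
  "is_profile n h p \<longleftrightarrow> (\<forall>i\<in>{1..h}. linear_order_on {1..n} (p i))"

definition rev_profile :: "(nat \<Rightarrow> nat rel) \<Rightarrow> (nat \<Rightarrow> nat rel)" where
  "rev_profile p = (\<lambda>i. (p i)\<inverse>)"

definition spref :: "nat rel \<Rightarrow> nat \<Rightarrow> nat \<Rightarrow> bool" where
  "spref r x y \<longleftrightarrow> x \<noteq> y \<and> (x, y) \<in> r"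

definition cnt :: "nat \<Rightarrow> (nat \<Rightarrow> nat rel) \<Rightarrow> nat \<Rightarrow> nat \<Rightarrow> nat" where
  "cnt h p x y = card {i \<in> {1..h}. spref (p i) x y}"

definition Dmu :: "nat \<Rightarrow> nat \<Rightarrow> (nat \<Rightarrow> nat rel) \<Rightarrow> nat \<Rightarrow> nat set" where
  "Dmu n h p mu = {x \<in> {1..n}. \<forall>y\<in>{1..n}. cnt h p y x < mu}"

definition mu_of :: "nat \<Rightarrow> nat \<Rightarrow> (nat \<Rightarrow> nat rel) \<Rightarrow> nat" where
  "mu_of n h p = (LEAST mu. h < 2 * mu \<and> mu \<le> h \<and> Dmu n h p mu \<noteq> {})"

definition Gamma :: "nat \<Rightarrow> nat \<Rightarrow> (nat \<Rightarrow> nat rel) \<Rightarrow> nat \<Rightarrow> nat rel" where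
  "Gamma n h p mu = {(x, y). x \<in> {1..n} \<and> y \<in> {1..n} \<and> mu \<le> cnt h p x y}"

definition components :: "nat set \<Rightarrow> nat rel \<Rightarrow> nat set set" where
  "components V E = V // ((E \<union> E\<inverse>)\<^sup>*)"

definition is_connected :: "nat set \<Rightarrow> nat rel \<Rightarrow> bool" where
  "is_connected V E \<longleftrightarrow> (\<forall>x\<in>V. \<forall>y\<in>V. (x, y) \<in> (E \<union> E\<inverse>)\<^sup>*)"

definition has_acyclic_component :: "nat set \<Rightarrow> nat rel \<Rightarrow> bool" where
  "has_acyclic_component V E \<longleftrightarrow> (\<exists>C \<in> components V E. acyclic (E \<inter> (C \<times> C)))"

end

theory Submission
  imports Defs
begin

lemma comp_source:
  assumes sub: "E \<subseteq> V \<times> V" and fin: "finite E"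
    and C: "C \<in> components V E" and ac: "acyclic (E \<inter> (C \<times> C))"
  shows "\<exists>x\<in>V. \<forall>y. (y, x) \<notin> E"
proof -
  obtain x where xV: "x \<in> V" and Cx: "C = ((E \<union> E\<inverse>)\<^sup>*) `` {x}"
    using C unfolding components_def by (auto elim: quotientE)
  have wf: "wf (E \<inter> (C \<times> C))"
    using fin ac by (intro finite_acyclic_wf) auto
  have "x \<in> C" using Cx by auto
  then obtain z where zC: "z \<in> C" and zmin: "\<forall>y. (y, z) \<in> E \<inter> (C \<times> C) \<longrightarrow> y \<notin> C"
    using wf unfolding wf_eq_minimal by blast
  have "\<forall>y. (y, z) \<notin> E"
  proof (intro allI notI)
    fix y assume yz: "(y, z) \<in> E"
    have "(x, z) \<in> (E \<union> E\<inverse>)\<^sup>*" using zC Cx by auto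
    moreover have "(z, y) \<in> E \<union> E\<inverse>" using yz by auto
    ultimately have "(x, y) \<in> (E \<union> E\<inverse>)\<^sup>*" by (rule rtrancl_into_rtrancl)
    hence "y \<in> C" using Cx by auto
    thus False using zmin yz zC by blast
  qed
  moreover have "z \<in> V"
  proof -
    have "(x, z) \<in> (E \<union> E\<inverse>)\<^sup>*" using zC Cx by auto
    thus ?thesis
    proof (induction rule: rtrancl_induct)
      case base thus ?case using xV .
    next
      case (step a b) thus ?case using sub by auto
    qed
  qed
  ultimately show ?thesis by blast
qed

lemma comp_sink:
  assumes sub: "E \<subseteq> V \<times> V" and fin: "finite E"
    and C: "C \<in> components V E" and ac: "acyclic (E \<inter> (C \<times> C))"
  shows "\<exists>x\<in>V. \<forall>y. (x, y) \<notin> E"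
proof -
  have "components V (E\<inverse>) = components V E"
    unfolding components_def by (simp add: Un_commute)
  moreover have "E\<inverse> \<inter> (C \<times> C) = (E \<inter> (C \<times> C))\<inverse>" by auto
  ultimately have "\<exists>x\<in>V. \<forall>y. (y, x) \<notin> E\<inverse>"
    using comp_source[of "E\<inverse>" V C] sub fin C ac by (auto simp: acyclic_converse)
  thus ?thesis by auto
qed

lemma cnt_rev: "cnt h (rev_profile p) x y = cnt h p y x"
  unfolding cnt_def rev_profile_def spref_def by (rule arg_cong[where f=card]) auto

lemma Gamma_rev: "Gamma n h (rev_profile p) m = (Gamma n h p m)\<inverse>"
  unfolding Gamma_def by (auto simp: cnt_rev)

lemma Gamma_sub: "Gamma n h p m \<subseteq> {1..n} \<times> {1..n}"
  unfolding Gamma_def by auto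

lemma Gamma_fin: "finite (Gamma n h p m)"
  using Gamma_sub by (rule finite_subset) auto

lemma Dmu_src: "Dmu n h p m = {x\<in>{1..n}. \<forall>y. (y, x) \<notin> Gamma n h p m}"
proof -
  have "(\<forall>y\<in>{1..n}. cnt h p y x < m) \<longleftrightarrow> (\<forall>y. (y, x) \<notin> Gamma n h p m)" if "x \<in> {1..n}" for x
  proof
    assume "\<forall>y\<in>{1..n}. cnt h p y x < m" thus "\<forall>y. (y, x) \<notin> Gamma n h p m"
      unfolding Gamma_def using leD by blast
  next
    assume a: "\<forall>y. (y, x) \<notin> Gamma n h p m"
    show "\<forall>y\<in>{1..n}. cnt h p y x < m"
    proof
      fix y assume "y \<in> {1..n}"
      with a that have "\<not> m \<le> cnt h p y x" unfolding Gamma_def by blast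
      thus "cnt h p y x < m" by simp
    qed
  qed
  thus ?thesis unfolding Dmu_def by auto
qed

lemma Dmu_rev: "Dmu n h (rev_profile p) m = {x\<in>{1..n}. \<forall>y. (x, y) \<notin> Gamma n h p m}"
proof -
  have "(\<forall>y\<in>{1..n}. cnt h p x y < m) \<longleftrightarrow> (\<forall>y. (x, y) \<notin> Gamma n h p m)" if "x \<in> {1..n}" for x
  proof
    assume "\<forall>y\<in>{1..n}. cnt h p x y < m" thus "\<forall>y. (x, y) \<notin> Gamma n h p m"
      unfolding Gamma_def using leD by blast
  next
    assume a: "\<forall>y. (x, y) \<notin> Gamma n h p m"
    show "\<forall>y\<in>{1..n}. cnt h p x y < m"
    proof
      fix y assume "y \<in> {1..n}"
      with a that have "\<not> m \<le> cnt h p x y" unfolding Gamma_def by blast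
      thus "cnt h p x y < m" by simp
    qed
  qed
  thus ?thesis unfolding Dmu_def cnt_rev by auto
qed

lemma exists_top:
  assumes "is_profile n h p" "n \<ge> 1" "h \<ge> 1"
  shows "Dmu n h p h \<noteq> {}"
proof -
  have lin: "linear_order_on {1..n} (p 1)" using assms unfolding is_profile_def by auto
  define R where "R = {(x, y). spref (p 1) x y}"
  have "trans R" using lin unfolding R_def spref_def linear_order_on_def partial_order_on_def
      preorder_on_def trans_def antisym_def by blast
  hence "R\<^sup>+ = R" by (rule trancl_id)
  hence acR: "acyclic R" unfolding acyclic_def R_def spref_def by auto
  have "R \<subseteq> {1..n} \<times> {1..n}" using lin unfolding R_def spref_def linear_order_on_def
      partial_order_on_def preorder_on_def refl_on_def by auto
  hence "finite R" by (rule finite_subset) auto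
  hence "wf R" using acR by (rule finite_acyclic_wf)
  then obtain z where zV: "z \<in> {1..n}" and zmin: "\<forall>y. (y, z) \<in> R \<longrightarrow> y \<notin> {1..n}"
    using assms(2) unfolding wf_eq_minimal by (metis atLeastAtMost_iff order_refl)
  have "z \<in> Dmu n h p h"
    unfolding Dmu_def
  proof (intro CollectI conjI ballI zV)
    fix y assume yV: "y \<in> {1..n}"
    have "{i \<in> {1..h}. spref (p i) y z} \<subseteq> {1..h} - {1}"
      using zmin yV unfolding R_def by auto
    hence "cnt h p y z \<le> card ({1..h} - {1::nat})" unfolding cnt_def
      by (intro card_mono) auto
    also have "\<dots> < h" using assms(3) by simp
    finally show "cnt h p y z < h" .
  qed
  thus ?thesis by auto
qed

theorem lemma6:
  fixes n h :: nat and p :: "nat \<Rightarrow> nat rel"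
  assumes "n \<ge> 2" and "h \<ge> 2"
    and "is_profile n h p"
    and "has_acyclic_component {1..n} (Gamma n h p (mu_of n h p))"
    and "has_acyclic_component {1..n}
           (Gamma n h (rev_profile p) (mu_of n h (rev_profile p)))"
  shows "mu_of n h p = mu_of n h (rev_profile p)
    \<and> (is_connected {1..n} (Gamma n h p (mu_of n h p)) \<longrightarrow>
           Dmu n h p (mu_of n h p) \<inter> Dmu n h (rev_profile p) (mu_of n h (rev_profile p)) = {})
    \<and> (acyclic (Gamma n h p (mu_of n h p)) \<longrightarrow>
           \<not> (\<exists>x\<in>{1..n}. Dmu n h p (mu_of n h p) = {x} \<and>
                          Dmu n h (rev_profile p) (mu_of n h (rev_profile p)) = {x}))"
proof -
  define m where "m = mu_of n h p"
  define m' where "m' = mu_of n h (rev_profile p)"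
  define G where "G = Gamma n h p"
  have hP: "h < 2 * h \<and> h \<le> h \<and> Dmu n h p h \<noteq> {}"
    using exists_top[OF assms(3)] assms(1,2) by auto
  have Pm: "h < 2 * m \<and> m \<le> h \<and> Dmu n h p m \<noteq> {}"
    unfolding m_def mu_of_def by (rule LeastI[of _ h], rule hP)
  obtain C where C: "C \<in> components {1..n} (G m)" "acyclic (G m \<inter> (C \<times> C))"
    using assms(4) unfolding has_acyclic_component_def G_def m_def by blast
  obtain x where "x \<in> {1..n}" "\<forall>y. (x, y) \<notin> G m"
    using comp_sink[OF _ _ C] Gamma_sub Gamma_fin unfolding G_def by blast
  hence "x \<in> Dmu n h (rev_profile p) m" unfolding Dmu_rev G_def by auto
  hence Prm: "h < 2 * m \<and> m \<le> h \<and> Dmu n h (rev_profile p) m \<noteq> {}" using Pm by auto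
  have le1: "m' \<le> m" unfolding m'_def mu_of_def by (rule Least_le, rule Prm)
  have Pm': "h < 2 * m' \<and> m' \<le> h \<and> Dmu n h (rev_profile p) m' \<noteq> {}"
    unfolding m'_def mu_of_def by (rule LeastI[of _ m], rule Prm)
  obtain C' where C': "C' \<in> components {1..n} ((G m')\<inverse>)" "acyclic ((G m')\<inverse> \<inter> (C' \<times> C'))"
    using assms(5) unfolding has_acyclic_component_def G_def m'_def Gamma_rev by blast
  have sub': "(G m')\<inverse> \<subseteq> {1..n} \<times> {1..n}" using Gamma_sub[of n h p m'] unfolding G_def by auto
  have fin': "finite ((G m')\<inverse>)" using Gamma_fin unfolding G_def by auto
  obtain x' where "x' \<in> {1..n}" "\<forall>y. (x', y) \<notin> (G m')\<inverse>"
    using comp_sink[OF sub' fin' C'] by blast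
  hence "x' \<in> Dmu n h p m'" unfolding Dmu_src G_def by auto
  hence "h < 2 * m' \<and> m' \<le> h \<and> Dmu n h p m' \<noteq> {}" using Pm' by auto
  hence le2: "m \<le> m'" unfolding m_def mu_of_def by (rule Least_le)
  have eq: "m = m'" using le1 le2 by simp
  have part2: "is_connected {1..n} (G m) \<longrightarrow>
           Dmu n h p m \<inter> Dmu n h (rev_profile p) m = {}"
  proof (intro impI equalityI subsetI)
    fix x assume con: "is_connected {1..n} (G m)" and xD: "x \<in> Dmu n h p m \<inter> Dmu n h (rev_profile p) m"
    have xV: "x \<in> {1..n}" and nin: "\<forall>y. (y, x) \<notin> G m" and nout: "\<forall>y. (x, y) \<notin> G m"
      using xD Dmu_rev[of n h p m] Dmu_src[of n h p m] unfolding G_def by auto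
    obtain y where yV: "y \<in> {1..n}" and yx: "y \<noteq> x"
      using that[of "if x = 1 then 2 else 1"] assms(1) xV by (auto split: if_splits)
    have "(x, y) \<in> (G m \<union> (G m)\<inverse>)\<^sup>*" using con xV yV unfolding is_connected_def by auto
    then have "\<exists>z. (x, z) \<in> G m \<union> (G m)\<inverse>"
    proof (rule converse_rtranclE)
      assume "x = y" with yx show ?thesis by simp
    next
      fix z assume "(x, z) \<in> G m \<union> (G m)\<inverse>" thus ?thesis by (rule exI)
    qed
    then obtain z where "(x, z) \<in> G m \<or> (z, x) \<in> G m" by auto
    then show "x \<in> {}"
      using nin nout by auto
  qed auto
  have part3: "acyclic (G m) \<longrightarrow> \<not> (\<exists>x\<in>{1..n}. Dmu n h p m = {x} \<and> Dmu n h (rev_profile p) m = {x})"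
  proof (intro impI notI)
    assume ac: "acyclic (G m)" and "\<exists>x\<in>{1..n}. Dmu n h p m = {x} \<and> Dmu n h (rev_profile p) m = {x}"
    from this(2) obtain x where xV: "x \<in> {1..n}" and D: "Dmu n h p m = {x} \<and> Dmu n h (rev_profile p) m = {x}"
      by (rule bexE)
    have D1: "Dmu n h p m = {x}" and D2: "Dmu n h (rev_profile p) m = {x}" using D by simp_all
    have nout: "\<forall>y. (x, y) \<notin> G m" using D2 unfolding Dmu_rev G_def by auto
    have wf: "wf (G m)" using ac Gamma_fin unfolding G_def by (intro finite_acyclic_wf) auto
    obtain y where yV: "y \<in> {1..n}" and yx: "y \<noteq> x"
      using that[of "if x = 1 then 2 else 1"] assms(1) xV by (auto split: if_splits)
    hence "y \<in> {1..n} - {x}" by auto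
    then obtain z where zS: "z \<in> {1..n} - {x}" and zmin: "\<forall>w. (w, z) \<in> G m \<longrightarrow> w \<notin> {1..n} - {x}"
      by (rule wf_eq_minimal[THEN iffD1, OF wf, rule_format, THEN bexE]) blast+
    have "\<forall>w. (w, z) \<notin> G m"
    proof (intro allI notI)
      fix w assume wz: "(w, z) \<in> G m"
      hence "w \<in> {1..n}" using Gamma_sub[of n h p m] unfolding G_def by auto
      moreover have "w \<noteq> x" using nout wz by auto
      ultimately show False using zmin wz by auto
    qed
    hence "z \<in> Dmu n h p m" using zS unfolding Dmu_src G_def by auto
    thus False using D1 zS by auto
  qed
  show ?thesis using eq part2 part3 unfolding m_def m'_def G_def by simp
qed

end
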